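(* Let $A$ be a vertex of finite height in a monotonous quiver $\mathcal O$. Then for every vertex $B$ of the clade $\mathcal O_A$ we have $\infty>h(B)\ge h(A)$ and $h_A(B)\ge h(B)-h(A)$, where $h$ and $h_A$ denote heights in $\mathcal O$ and in $\mathcal O_A$, respectively.
   Context: A quiver consists of a class of vertices and, for each ordered pair of vertices $(A,B)$, a set of edges $A\to B$ (loops and multiple edges allowed). An evolution of length $m\ge 0$ is a sequence $A_0\leftarrow A_1\leftarrow\cdots\leftarrow A_m$ of vertices together with edges $A_k\to A_{k-1}$ ($1\le k\le m$); $A_0$ is its initial and $A_m$ its terminal vertex. Write $A\le B$ ($A$ is an ancestor of $B$, $B$ a descendant of $A$) if there is an evolution with initial vertex $A$ and terminal vertex $B$; $A,B$ are isotypic if $A\le B$ and $B\le A$. A vertex $A$ is primitive if every ancestor of $A$ is isotypic to $A$. A full evolution for $X$ is an evolution with primitive initial vertex and terminal vertex $X$. The height of $X$ is the smallest length of a full evolution for $X$ ($\infty$ if none). A quiver is monotonous if $h(A)\ge h(B)$ for every edge $A\to B$. The clade $\mathcal O_A$ of a vertex $A$ is the quiver formed by all descendants of $A$ in $\mathcal O$ and all edges of $\mathcal O$ between them (primitivity and height in $\mathcal O_A$ are computed within $\mathcal O_A$). *)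

theory Defs
  imports Main "HOL-Library.Extended_Nat"
begin

text \<open>A quiver is given by a vertex set V and, for each ordered pair of vertices (A,B),
  a set of edges E A B from A to B (only pairs of vertices in V are relevant).\<close>

definition evolution :: "'v set \<Rightarrow> ('v \<Rightarrow> 'v \<Rightarrow> 'e set) \<Rightarrow> (nat \<Rightarrow> 'v) \<Rightarrow> nat \<Rightarrow> bool" where
  "evolution V E a m \<longleftrightarrow> (\<forall>k\<le>m. a k \<in> V) \<and> (\<forall>k\<in>{1..m}. E (a k) (a (k - 1)) \<noteq> {})"

definition ancestor :: "'v set \<Rightarrow> ('v \<Rightarrow> 'v \<Rightarrow> 'e set) \<Rightarrow> 'v \<Rightarrow> 'v \<Rightarrow> bool" where
  "ancestor V E A B \<longleftrightarrow> (\<exists>a m. evolution V E a m \<and> a 0 = A \<and> a m = B)"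

definition isotypic :: "'v set \<Rightarrow> ('v \<Rightarrow> 'v \<Rightarrow> 'e set) \<Rightarrow> 'v \<Rightarrow> 'v \<Rightarrow> bool" where
  "isotypic V E A B \<longleftrightarrow> ancestor V E A B \<and> ancestor V E B A"

definition primitive :: "'v set \<Rightarrow> ('v \<Rightarrow> 'v \<Rightarrow> 'e set) \<Rightarrow> 'v \<Rightarrow> bool" where
  "primitive V E A \<longleftrightarrow> A \<in> V \<and> (\<forall>B. ancestor V E B A \<longrightarrow> isotypic V E B A)"

definition full_evolution :: "'v set \<Rightarrow> ('v \<Rightarrow> 'v \<Rightarrow> 'e set) \<Rightarrow> (nat \<Rightarrow> 'v) \<Rightarrow> nat \<Rightarrow> 'v \<Rightarrow> bool" where
  "full_evolution V E a m X \<longleftrightarrow> evolution V E a m \<and> primitive V E (a 0) \<and> a m = X"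

text \<open>Height: least length of a full evolution; \<infinity> (= Inf of the empty set) if none.\<close>
definition height :: "'v set \<Rightarrow> ('v \<Rightarrow> 'v \<Rightarrow> 'e set) \<Rightarrow> 'v \<Rightarrow> enat" where
  "height V E X = (INF m \<in> {m. \<exists>a. full_evolution V E a m X}. enat m)"

definition monotonous :: "'v set \<Rightarrow> ('v \<Rightarrow> 'v \<Rightarrow> 'e set) \<Rightarrow> bool" where
  "monotonous V E \<longleftrightarrow> (\<forall>A\<in>V. \<forall>B\<in>V. E A B \<noteq> {} \<longrightarrow> height V E A \<ge> height V E B)"

definition clade_vertices :: "'v set \<Rightarrow> ('v \<Rightarrow> 'v \<Rightarrow> 'e set) \<Rightarrow> 'v \<Rightarrow> 'v set" where
  "clade_vertices V E A = {B. ancestor V E A B}"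

definition clade_edges :: "'v set \<Rightarrow> ('v \<Rightarrow> 'v \<Rightarrow> 'e set) \<Rightarrow> 'v \<Rightarrow> 'v \<Rightarrow> 'v \<Rightarrow> 'e set" where
  "clade_edges V E A B C =
     (if B \<in> clade_vertices V E A \<and> C \<in> clade_vertices V E A then E B C else {})"

end

theory Submission
  imports Defs
begin

lemma evo_concat:
  assumes "evolution V E a m" "evolution V E b n" "a m = b 0"
  shows "evolution V E (\<lambda>k. if k \<le> m then a k else b (k - m)) (m + n)"
  using assms unfolding evolution_def
proof (intro conjI ballI allI impI)
  fix k assume k: "k \<le> m + n"
  show "(if k \<le> m then a k else b (k - m)) \<in> V"
    using assms k unfolding evolution_def by auto
next
  fix k assume k: "k \<in> {1..m+n}"
  show "E (if k \<le> m then a k else b (k - m)) (if k - 1 \<le> m then a (k - 1) else b (k - 1 - m)) \<noteq> {}"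
  proof (cases "k \<le> m")
    case True thus ?thesis using assms k unfolding evolution_def by auto
  next
    case False
    hence "k - m \<in> {1..n}" using k by auto
    hence "E (b (k - m)) (b (k - m - 1)) \<noteq> {}" using assms(2) unfolding evolution_def by blast
    moreover have "k - 1 - m = k - m - 1" by simp
    show ?thesis
    proof (cases "k - 1 \<le> m")
      case True
      hence "k - m = 1" "k - 1 = m" using False by auto
      thus ?thesis using \<open>E (b (k - m)) (b (k - m - 1)) \<noteq> {}\<close> False assms(3) by simp
    next
      case F2: False
      thus ?thesis using calculation False by simp
    qed
  qed
qed

lemma ancestor_trans:
  assumes "ancestor V E X Y" "ancestor V E Y Z" shows "ancestor V E X Z"
proof -
  obtain a m where a: "evolution V E a m" "a 0 = X" "a m = Y" using assms(1) unfolding ancestor_def by blast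
  obtain b n where b: "evolution V E b n" "b 0 = Y" "b n = Z" using assms(2) unfolding ancestor_def by blast
  show ?thesis unfolding ancestor_def
    apply (rule exI[of _ "\<lambda>k. if k \<le> m then a k else b (k - m)"], rule exI[of _ "m+n"])
    using evo_concat[OF a(1) b(1)] a b by auto
qed

lemma evo_prefix:
  assumes "evolution V E a m" "j \<le> m" shows "evolution V E a j"
  using assms unfolding evolution_def by auto

lemma ancestor_in: "ancestor V E X Y \<Longrightarrow> X \<in> V \<and> Y \<in> V"
  unfolding ancestor_def evolution_def by force

lemma height_le: "full_evolution V E a m X \<Longrightarrow> height V E X \<le> enat m"
  unfolding height_def by (rule INF_lower2[of m]) auto

lemma height_attained:
  assumes "height V E X < \<infinity>"
  shows "\<exists>a m. full_evolution V E a m X \<and> height V E X = enat m"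
proof -
  let ?S = "{m. \<exists>a. full_evolution V E a m X}"
  have ne: "?S \<noteq> {}"
  proof
    assume "?S = {}"
    hence "height V E X = \<infinity>" unfolding height_def by (simp add: top_enat_def)
    thus False using assms by simp
  qed
  have ne': "enat ` ?S \<noteq> {}" using ne by blast
  have h: "height V E X = (LEAST x. x \<in> enat ` ?S)"
    unfolding height_def Inf_enat_def if_not_P[OF ne'] by (rule refl)
  from ne obtain m0 where "m0 \<in> ?S" by blast
  hence "enat m0 \<in> enat ` ?S" by (rule imageI)
  hence "(LEAST x. x \<in> enat ` ?S) \<in> enat ` ?S" by (rule LeastI)
  then obtain m where m: "m \<in> ?S" "(LEAST x. x \<in> enat ` ?S) = enat m" by blast
  from m(1) obtain a where "full_evolution V E a m X" by blast
  thus ?thesis using h m(2) by auto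
qed

lemma mono_height:
  assumes "monotonous V E" "ancestor V E X Y" shows "height V E X \<le> height V E Y"
proof -
  obtain a m where a: "evolution V E a m" "a 0 = X" "a m = Y" using assms(2) unfolding ancestor_def by blast
  have "\<forall>k. k \<le> m \<longrightarrow> height V E (a 0) \<le> height V E (a k)"
  proof (intro allI)
    fix k show "k \<le> m \<longrightarrow> height V E (a 0) \<le> height V E (a k)"
    proof (induction k)
      case 0 show ?case by simp
    next
      case (Suc k)
      show ?case
      proof
        assume k: "Suc k \<le> m"
        have "E (a (Suc k)) (a k) \<noteq> {}" "a k \<in> V" "a (Suc k) \<in> V"
          using a(1) k unfolding evolution_def by (auto dest: bspec[of _ _ "Suc k"])
        hence "height V E (a k) \<le> height V E (a (Suc k))"
          using assms(1) unfolding monotonous_def by blast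
        thus "height V E (a 0) \<le> height V E (a (Suc k))" using Suc k by auto
      qed
    qed
  qed
  thus ?thesis using a by auto
qed

lemma clade_sub: "B \<in> clade_vertices V E A \<Longrightarrow> B \<in> V"
  unfolding clade_vertices_def using ancestor_in by fast

lemma clade_evo:
  assumes "evolution (clade_vertices V E A) (clade_edges V E A) c m"
  shows "evolution V E c m"
  using assms clade_sub unfolding evolution_def clade_edges_def
  by (metis empty_iff)

lemma ancestor_clade:
  assumes "ancestor V E A P"
  shows "ancestor (clade_vertices V E A) (clade_edges V E A) A P"
proof -
  obtain a n where a: "evolution V E a n" "a 0 = A" "a n = P" using assms unfolding ancestor_def by blast
  have inc: "a k \<in> clade_vertices V E A" if "k \<le> n" for k
    unfolding clade_vertices_def ancestor_def using evo_prefix[OF a(1) that] a(2) by blast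
  have "evolution (clade_vertices V E A) (clade_edges V E A) a n"
    unfolding evolution_def clade_edges_def using inc a(1) unfolding evolution_def by auto
  thus ?thesis using a unfolding ancestor_def by blast
qed

theorem theorem9p3:
  fixes V :: "'v set" and E :: "'v \<Rightarrow> 'v \<Rightarrow> 'e set" and A :: 'v
  assumes "monotonous V E"
    and "A \<in> V"
    and "height V E A < \<infinity>"
  shows "\<forall>B \<in> clade_vertices V E A.
           height V E B < \<infinity> \<and> height V E B \<ge> height V E A \<and>
           height (clade_vertices V E A) (clade_edges V E A) B \<ge> height V E B - height V E A"
proof
  fix B assume B: "B \<in> clade_vertices V E A"
  hence anc: "ancestor V E A B" unfolding clade_vertices_def by simp
  have fin: "height V E B < \<infinity>" if h1: "ancestor V E X B" and h2: "height V E X < \<infinity>" for X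
  proof -
    obtain d n where d: "full_evolution V E d n X" using height_attained[OF h2] by blast
    obtain b k where b: "evolution V E b k" "b 0 = X" "b k = B" using h1 unfolding ancestor_def by blast
    have "full_evolution V E (\<lambda>k. if k \<le> n then d k else b (k - n)) (n + k) B"
      using evo_concat[of V E d n b k] d b unfolding full_evolution_def by auto
    from height_le[OF this] have "height V E B \<le> enat (n + k)" .
    moreover have "enat (n + k) < \<infinity>" by simp
    ultimately show ?thesis by (rule le_less_trans)
  qed
  have g1: "height V E B < \<infinity>" using fin[OF anc assms(3)] .
  have g2: "height V E B \<ge> height V E A" using mono_height[OF assms(1) anc] .
  have g3: "height V E B - height V E A \<le> enat m"
    if fe: "full_evolution (clade_vertices V E A) (clade_edges V E A) c m B" for c m
  proof -
    let ?P = "c 0"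
    have "evolution (clade_vertices V E A) (clade_edges V E A) c m" using fe unfolding full_evolution_def by blast
    note cev = clade_evo[OF this]
    have pprim: "primitive (clade_vertices V E A) (clade_edges V E A) ?P"
      using fe unfolding full_evolution_def by blast
    hence "?P \<in> clade_vertices V E A" unfolding primitive_def by blast
    hence "ancestor V E A ?P" unfolding clade_vertices_def by simp
    from ancestor_clade[OF this] pprim
    have "ancestor (clade_vertices V E A) (clade_edges V E A) ?P A"
      unfolding primitive_def isotypic_def by blast
    then obtain e j where e: "evolution (clade_vertices V E A) (clade_edges V E A) e j" "e 0 = ?P" "e j = A"
      unfolding ancestor_def by blast
    have "ancestor V E ?P A" using clade_evo[OF e(1)] e unfolding ancestor_def by blast
    hence hP: "height V E ?P \<le> height V E A" using mono_height[OF assms(1)] by blast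
    have Pfin: "height V E ?P < \<infinity>" by (rule le_less_trans[OF hP assms(3)])
    obtain d n where d: "full_evolution V E d n ?P" "height V E ?P = enat n"
      using height_attained[OF Pfin] by blast
    have "full_evolution V E (\<lambda>k. if k \<le> n then d k else c (k - n)) (n + m) B"
      using evo_concat[of V E d n c m] d cev fe unfolding full_evolution_def by auto
    from height_le[OF this] have L: "height V E B \<le> enat (n + m)" .
    obtain hA where hA: "height V E A = enat hA" using assms(3) by (cases "height V E A") auto
    obtain hB where hB: "height V E B = enat hB" using g1 by (cases "height V E B") auto
    have "hB \<le> n + m" using L hB by simp
    moreover have "n \<le> hA" using hP d(2) hA by simp
    ultimately have "hB - hA \<le> m" by simp
    thus ?thesis using hA hB by simp
  qed
  have "height V E B - height V E A \<le> height (clade_vertices V E A) (clade_edges V E A) B"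
    unfolding height_def[of "clade_vertices V E A"]
  proof (rule INF_greatest)
    fix x assume "x \<in> {m. \<exists>a. full_evolution (clade_vertices V E A) (clade_edges V E A) a m B}"
    then obtain c where "full_evolution (clade_vertices V E A) (clade_edges V E A) c x B" by blast
    thus "height V E B - height V E A \<le> enat x" by (rule g3)
  qed
  thus "height V E B < \<infinity> \<and> height V E B \<ge> height V E A \<and>
           height (clade_vertices V E A) (clade_edges V E A) B \<ge> height V E B - height V E A"
    using g1 g2 by simp
qed

end
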